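(* Let $0<\alpha<1$, $K_0>1$, and let $F=(F_1,F_2)$ be a $C^1$ map defined near a point $z\in\mathbb R^2$ with $DF_z$ invertible, such that at $z$: (H1) $|F_{2x}|+\alpha|F_{2y}|+\alpha^2|F_{1y}|\le\alpha|F_{1x}|$; (H2) $|F_{1x}|-\alpha|F_{1y}|\ge K_0$; (H3) $|F_{1y}|+\alpha|F_{2y}|+\alpha^2|F_{2x}|\le\alpha|F_{1x}|$; (H4) $|F_{1x}|-\alpha|F_{2x}|\ge J_F(z)K_0$, where $J_F(z)=|F_{1x}F_{2y}-F_{1y}F_{2x}|$. Then, with $K^u_\alpha=\{(v_1,v_2):|v_2|\le\alpha|v_1|\}$, $K^s_\alpha=\{(v_1,v_2):|v_1|\le\alpha|v_2|\}$ and the max norm $|(v_1,v_2)|=\max(|v_1|,|v_2|)$: $DF_z(K^u_\alpha)\subseteq K^u_\alpha$; $|DF_zv|\ge K_0|v|$ for $v\in K^u_\alpha$; $DF_z^{-1}(K^s_\alpha)\subseteq K^s_\alpha$; and $|DF_z^{-1}v|\ge K_0|v|$ for $v\in K^s_\alpha$.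
   Context: All partial derivatives are evaluated at $z$. Tangent spaces are identified with $\mathbb R^2$. *)

theory Defs
  imports "HOL-Analysis.Analysis"
begin

definition maxnorm :: "real \<times> real \<Rightarrow> real" where
  "maxnorm v = max \<bar>fst v\<bar> \<bar>snd v\<bar>"

definition cone_u :: "real \<Rightarrow> (real \<times> real) set" where
  "cone_u \<alpha> = {v. \<bar>snd v\<bar> \<le> \<alpha> * \<bar>fst v\<bar>}"

definition cone_s :: "real \<Rightarrow> (real \<times> real) set" where
  "cone_s \<alpha> = {v. \<bar>fst v\<bar> \<le> \<alpha> * \<bar>snd v\<bar>}"

end

theory Submission
  imports Defs
begin

lemma lowb:
  fixes a b v1 v2 al :: real
  assumes "\<bar>v2\<bar> \<le> al * \<bar>v1\<bar>"
  shows "\<bar>a * v1 + b * v2\<bar> \<ge> (\<bar>a\<bar> - al * \<bar>b\<bar>) * \<bar>v1\<bar>"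
proof -
  have t: "\<bar>a * v1\<bar> \<le> \<bar>a * v1 + b * v2\<bar> + \<bar>b * v2\<bar>"
    using abs_triangle_ineq4[of "a * v1 + b * v2" "b * v2"] by simp
  have "\<bar>b * v2\<bar> \<le> \<bar>b\<bar> * (al * \<bar>v1\<bar>)" using assms by (simp add: abs_mult mult_left_mono)
  moreover have "(\<bar>a\<bar> - al * \<bar>b\<bar>) * \<bar>v1\<bar> = \<bar>a * v1\<bar> - \<bar>b\<bar> * (al * \<bar>v1\<bar>)"
    by (simp add: abs_mult algebra_simps)
  ultimately show ?thesis using t by linarith
qed

lemma uppb:
  fixes a b v1 v2 al :: real
  assumes "\<bar>v2\<bar> \<le> al * \<bar>v1\<bar>"
  shows "\<bar>a * v1 + b * v2\<bar> \<le> (\<bar>a\<bar> + al * \<bar>b\<bar>) * \<bar>v1\<bar>"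
proof -
  have t: "\<bar>a * v1 + b * v2\<bar> \<le> \<bar>a * v1\<bar> + \<bar>b * v2\<bar>" by (rule abs_triangle_ineq)
  have "\<bar>b * v2\<bar> \<le> \<bar>b\<bar> * (al * \<bar>v1\<bar>)" using assms by (simp add: abs_mult mult_left_mono)
  moreover have "(\<bar>a\<bar> + al * \<bar>b\<bar>) * \<bar>v1\<bar> = \<bar>a * v1\<bar> + \<bar>b\<bar> * (al * \<bar>v1\<bar>)"
    by (simp add: abs_mult algebra_simps)
  ultimately show ?thesis using t by linarith
qed

lemma maxn:
  fixes v1 v2 al :: real
  assumes "\<bar>v2\<bar> \<le> al * \<bar>v1\<bar>" "0 < al" "al < 1"
  shows "max \<bar>v1\<bar> \<bar>v2\<bar> = \<bar>v1\<bar>"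
proof -
  have "al * \<bar>v1\<bar> \<le> \<bar>v1\<bar>" using assms by (simp add: mult_left_le_one_le)
  then show ?thesis using assms by simp
qed

theorem proposition2p1:
  fixes \<alpha> K0 :: real
    and F :: "real \<times> real \<Rightarrow> real \<times> real"
    and F' :: "real \<times> real \<Rightarrow> ((real \<times> real) \<Rightarrow>\<^sub>L (real \<times> real))"
    and z :: "real \<times> real" and S :: "(real \<times> real) set"
    and F1x F1y F2x F2y :: real
  assumes alpha: "0 < \<alpha>" "\<alpha> < 1"
    and K0: "K0 > 1"
    and S: "open S" "z \<in> S"
    and deriv: "\<And>w. w \<in> S \<Longrightarrow> (F has_derivative blinfun_apply (F' w)) (at w)"
    and C1: "continuous_on S F'"
    and inv: "bij (blinfun_apply (F' z))"
    and F1x: "F1x = fst (blinfun_apply (F' z) (1, 0))"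
    and F2x: "F2x = snd (blinfun_apply (F' z) (1, 0))"
    and F1y: "F1y = fst (blinfun_apply (F' z) (0, 1))"
    and F2y: "F2y = snd (blinfun_apply (F' z) (0, 1))"
    and H1: "\<bar>F2x\<bar> + \<alpha> * \<bar>F2y\<bar> + \<alpha>\<^sup>2 * \<bar>F1y\<bar> \<le> \<alpha> * \<bar>F1x\<bar>"
    and H2: "\<bar>F1x\<bar> - \<alpha> * \<bar>F1y\<bar> \<ge> K0"
    and H3: "\<bar>F1y\<bar> + \<alpha> * \<bar>F2y\<bar> + \<alpha>\<^sup>2 * \<bar>F2x\<bar> \<le> \<alpha> * \<bar>F1x\<bar>"
    and H4: "\<bar>F1x\<bar> - \<alpha> * \<bar>F2x\<bar> \<ge> \<bar>F1x * F2y - F1y * F2x\<bar> * K0"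
  shows "blinfun_apply (F' z) ` cone_u \<alpha> \<subseteq> cone_u \<alpha> \<and>
    (\<forall>v \<in> cone_u \<alpha>. maxnorm (blinfun_apply (F' z) v) \<ge> K0 * maxnorm v) \<and>
    inv (blinfun_apply (F' z)) ` cone_s \<alpha> \<subseteq> cone_s \<alpha> \<and>
    (\<forall>v \<in> cone_s \<alpha>. maxnorm (inv (blinfun_apply (F' z)) v) \<ge> K0 * maxnorm v)"
proof -
  let ?L = "blinfun_apply (F' z)"
  have lin: "?L (v1, v2) = (F1x * v1 + F1y * v2, F2x * v1 + F2y * v2)" for v1 v2
  proof -
    have "(v1, v2) = v1 *\<^sub>R (1, 0) + v2 *\<^sub>R (0, 1)" by simp
    then have "?L (v1, v2) = v1 *\<^sub>R ?L (1, 0) + v2 *\<^sub>R ?L (0, 1)"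
      by (metis blinfun.add_right blinfun.scaleR_right)
    then show ?thesis using F1x F2x F1y F2y by (simp add: prod_eq_iff algebra_simps)
  qed
  have a1: "\<bar>F1x\<bar> > 1" using H2 K0 alpha using mult_nonneg_nonneg[of \<alpha> "\<bar>F1y\<bar>"] by linarith
  have Dnz: "F1x * F2y - F1y * F2x \<noteq> 0"
  proof
    assume D: "F1x * F2y - F1y * F2x = 0"
    have "?L (-F1y, F1x) = 0" using lin D by (simp add: algebra_simps prod_eq_iff)
    moreover have "?L 0 = 0" by simp
    ultimately have "(-F1y, F1x) = 0" using inv by (metis bij_def injD)
    then show False using a1 by (simp add: prod_eq_iff)
  qed
  have P1: "?L v \<in> cone_u \<alpha> \<and> maxnorm (?L v) \<ge> K0 * maxnorm v" if v: "v \<in> cone_u \<alpha>" for v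
  proof -
    obtain v1 v2 where vv: "v = (v1, v2)" by (cases v)
    have h: "\<bar>v2\<bar> \<le> \<alpha> * \<bar>v1\<bar>" using v vv by (simp add: cone_u_def)
    have w1: "\<bar>F1x * v1 + F1y * v2\<bar> \<ge> (\<bar>F1x\<bar> - \<alpha> * \<bar>F1y\<bar>) * \<bar>v1\<bar>"
      using lowb[OF h] by simp
    have w2: "\<bar>F2x * v1 + F2y * v2\<bar> \<le> (\<bar>F2x\<bar> + \<alpha> * \<bar>F2y\<bar>) * \<bar>v1\<bar>"
      using uppb[OF h] by simp
    have "(\<bar>F2x\<bar> + \<alpha> * \<bar>F2y\<bar>) * \<bar>v1\<bar> \<le> \<alpha> * ((\<bar>F1x\<bar> - \<alpha> * \<bar>F1y\<bar>) * \<bar>v1\<bar>)"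
    proof -
      have "\<bar>F2x\<bar> + \<alpha> * \<bar>F2y\<bar> \<le> \<alpha> * (\<bar>F1x\<bar> - \<alpha> * \<bar>F1y\<bar>)" using H1 by (simp add: power2_eq_square algebra_simps)
      then show ?thesis by (metis abs_ge_zero mult.assoc mult_right_mono)
    qed
    also have "\<dots> \<le> \<alpha> * \<bar>F1x * v1 + F1y * v2\<bar>" using w1 alpha by simp
    finally have c: "?L v \<in> cone_u \<alpha>" using w2 vv lin by (simp add: cone_u_def)
    have mv: "maxnorm v = \<bar>v1\<bar>" using h alpha vv unfolding maxnorm_def
      using maxn[OF h alpha] by simp
    have "K0 * \<bar>v1\<bar> \<le> (\<bar>F1x\<bar> - \<alpha> * \<bar>F1y\<bar>) * \<bar>v1\<bar>" using H2 by (simp add: mult_right_mono)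
    also have "\<dots> \<le> maxnorm (?L v)" using w1 vv lin unfolding maxnorm_def by (simp add: le_max_iff_disj)
    finally show ?thesis using c mv by simp
  qed
  have P2: "inv ?L v \<in> cone_s \<alpha> \<and> maxnorm (inv ?L v) \<ge> K0 * maxnorm v" if v: "v \<in> cone_s \<alpha>" for v
  proof -
    obtain v1 v2 where vv: "v = (v1, v2)" by (cases v)
    obtain u1 u2 where uu: "inv ?L v = (u1, u2)" by (cases "inv ?L v")
    have "?L (inv ?L v) = v" using inv by (simp add: bij_is_surj surj_f_inv_f)
    then have e1: "F1x * u1 + F1y * u2 = v1" and e2: "F2x * u1 + F2y * u2 = v2"
      using lin uu vv by auto
    define D where "D = F1x * F2y - F1y * F2x"
    have d1: "D * u1 = F2y * v1 - F1y * v2" unfolding D_def using e1 e2 by (auto simp: algebra_simps)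
    have d2: "D * u2 = F1x * v2 - F2x * v1" unfolding D_def using e1 e2 by (auto simp: algebra_simps)
    have h: "\<bar>v1\<bar> \<le> \<alpha> * \<bar>v2\<bar>" using v vv by (simp add: cone_s_def)
    have w2: "\<bar>F1x * v2 - F2x * v1\<bar> \<ge> (\<bar>F1x\<bar> - \<alpha> * \<bar>F2x\<bar>) * \<bar>v2\<bar>"
      using lowb[OF h, of F1x "-F2x"] by simp
    have w1: "\<bar>F2y * v1 - F1y * v2\<bar> \<le> (\<bar>F1y\<bar> + \<alpha> * \<bar>F2y\<bar>) * \<bar>v2\<bar>"
      using uppb[OF h, of "-F1y" F2y] by (simp add: add.commute)
    have "(\<bar>F1y\<bar> + \<alpha> * \<bar>F2y\<bar>) * \<bar>v2\<bar> \<le> \<alpha> * ((\<bar>F1x\<bar> - \<alpha> * \<bar>F2x\<bar>) * \<bar>v2\<bar>)"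
    proof -
      have "\<bar>F1y\<bar> + \<alpha> * \<bar>F2y\<bar> \<le> \<alpha> * (\<bar>F1x\<bar> - \<alpha> * \<bar>F2x\<bar>)" using H3 by (simp add: power2_eq_square algebra_simps)
      then show ?thesis by (metis abs_ge_zero mult.assoc mult_right_mono)
    qed
    also have "\<dots> \<le> \<alpha> * \<bar>F1x * v2 - F2x * v1\<bar>" using w2 alpha by simp
    finally have "\<bar>D * u1\<bar> \<le> \<alpha> * \<bar>D * u2\<bar>"
      using w1 d1 d2 by simp
    then have "\<bar>D\<bar> * \<bar>u1\<bar> \<le> \<bar>D\<bar> * (\<alpha> * \<bar>u2\<bar>)"
      by (simp add: abs_mult mult.left_commute)
    then have c: "\<bar>u1\<bar> \<le> \<alpha> * \<bar>u2\<bar>" using Dnz D_def by simp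
    have mv: "maxnorm v = \<bar>v2\<bar>" using h alpha vv unfolding maxnorm_def
      using maxn[OF h alpha] by simp
    have "\<bar>D\<bar> * (K0 * \<bar>v2\<bar>) = (\<bar>D\<bar> * K0) * \<bar>v2\<bar>" by simp
    also have "\<dots> \<le> (\<bar>F1x\<bar> - \<alpha> * \<bar>F2x\<bar>) * \<bar>v2\<bar>" using H4 D_def by (simp add: mult_right_mono)
    also have "\<dots> \<le> \<bar>D\<bar> * \<bar>u2\<bar>" using w2 d2 by (simp add: abs_mult[symmetric])
    finally have "K0 * \<bar>v2\<bar> \<le> \<bar>u2\<bar>" using Dnz D_def by simp
    then show ?thesis using c mv uu unfolding cone_s_def maxnorm_def by (auto simp: le_max_iff_disj)
  qed
  show ?thesis using P1 P2 by blast
qed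

end
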